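(* For complex numbers $x_1,\dots,x_M$ and $y_1,\dots,y_N$ with $N>M$ (pairwise distinct within each family and $x_a\ne y_b$), one has $\mathcal A^\pm_{\{y\}}\!\left[E^\mp_{\{x\}}\right]=0$.
   Context: Let $\eta\in\mathbb C\setminus\{0\}$. For a family $\{x\}=\{x_1,\dots,x_M\}$ and $y\in\mathbb C$, $E^\pm_{\{x\}}(y)=\prod_{n=1}^M\frac{y-x_n\pm\eta}{y-x_n}$. With $V(y_1,\dots,y_N)=\prod_{1\le b<a\le N}(y_a-y_b)$, for pairwise distinct $y_a$ and a function $f$ defined there, $\mathcal A^\pm_{\{y\}}[f]=\det_{1\le a,b\le N}[y_a^{b-1}-f(y_a)(y_a\pm\eta)^{b-1}]/V(y_1,\dots,y_N)$. *)

theory Defs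
  imports Complex_Main "Jordan_Normal_Form.Determinant"
begin

text \<open>Families are lists; the sign parameter s is 1 for "+" and -1 for "-".
  E s eta xs y = prod over n of (y - x_n + s*eta)/(y - x_n).\<close>
definition E_fam :: "complex \<Rightarrow> complex \<Rightarrow> complex list \<Rightarrow> complex \<Rightarrow> complex" where
  "E_fam s eta xs y = (\<Prod>n<length xs. (y - xs ! n + s * eta) / (y - xs ! n))"

definition Vdm :: "complex list \<Rightarrow> complex" where
  "Vdm ys = (\<Prod>a<length ys. \<Prod>b<a. ys ! a - ys ! b)"

definition A_op :: "complex \<Rightarrow> complex \<Rightarrow> complex list \<Rightarrow> (complex \<Rightarrow> complex) \<Rightarrow> complex" where
  "A_op s eta ys f =
     det (mat (length ys) (length ys)
       (\<lambda>(a, b). ys ! a ^ b - f (ys ! a) * (ys ! a + s * eta) ^ b)) / Vdm ys"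

end

theory Submission
  imports Defs
begin

lemma poly_sum_lessThan:
  fixes p :: "complex poly"
  assumes "degree p < N"
  shows "poly p x = (\<Sum>b<N. coeff p b * x ^ b)"
proof -
  have "poly p x = (\<Sum>i\<le>degree p. coeff p i * x ^ i)" by (rule poly_altdef)
  also have "\<dots> = (\<Sum>b<N. coeff p b * x ^ b)"
    by (rule sum.mono_neutral_left) (use assms in \<open>auto simp: coeff_eq_0\<close>)
  finally show ?thesis .
qed

theorem corollary2:
  fixes eta :: complex and xs ys :: "complex list" and s :: complex
  assumes "eta \<noteq> 0"
    and "s \<in> {1, -1}"
    and "distinct xs" and "distinct ys"
    and "set xs \<inter> set ys = {}"
    and "length ys > length xs"
  shows "A_op s eta ys (E_fam (- s) eta xs) = 0"
proof -
  define M where "M = length xs"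
  define N where "N = length ys"
  define c :: "complex poly" where "c = (\<Prod>n<M. [:-(xs!n) - s*eta, 1:])"
  define f where "f = E_fam (- s) eta xs"
  define A where "A = mat N N (\<lambda>(a, b). ys ! a ^ b - f (ys ! a) * (ys ! a + s * eta) ^ b)"
  have nz: "\<forall>n\<in>{..<M}. [:-(xs!n) - s*eta, 1:] \<noteq> 0" by auto
  have c0: "c \<noteq> 0" unfolding c_def by (subst prod_zero_iff) auto
  have dc: "degree c = M" unfolding c_def
    by (subst degree_prod_eq_sum_degree[OF nz]) auto
  have MN: "M < N" using assms(6) unfolding M_def N_def by simp
  have pc: "poly c z = (\<Prod>n<M. z - xs!n - s*eta)" for z
    unfolding c_def by (simp add: poly_prod algebra_simps)
  define v where "v = vec N (\<lambda>b. coeff c b)"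
  have vc: "v \<in> carrier_vec N" unfolding v_def by simp
  have vnz: "v \<noteq> 0\<^sub>v N"
  proof
    assume "v = 0\<^sub>v N"
    then have "v $ M = 0\<^sub>v N $ M" by simp
    then have "coeff c (degree c) = 0" using MN dc unfolding v_def by simp
    with c0 show False by simp
  qed
  have Ac: "A \<in> carrier_mat N N" unfolding A_def by simp
  have Av: "A *\<^sub>v v = 0\<^sub>v N"
  proof (rule eq_vecI)
    fix a assume a: "a < dim_vec (0\<^sub>v N :: complex vec)"
    then have aN: "a < N" by simp
    let ?y = "ys ! a"
    have ya: "?y \<in> set ys" using aN unfolding N_def by simp
    have Qnz: "(\<Prod>n<M. ?y - xs!n) \<noteq> 0"
    proof -
      have "?y - xs ! n \<noteq> 0" if "n < M" for n
      proof -
      from that have "xs ! n \<in> set xs" unfolding M_def by simp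
      with ya assms(5) show "?y - xs ! n \<noteq> 0" by auto
      qed
      then show ?thesis by (simp add: prod_zero_iff)
    qed
    have fy: "f ?y = (\<Prod>n<M. ?y - xs!n - s*eta) / (\<Prod>n<M. ?y - xs!n)"
      unfolding f_def E_fam_def M_def by (simp add: prod_dividef algebra_simps)
    have pc2: "poly c (?y + s*eta) = (\<Prod>n<M. ?y - xs!n)"
      unfolding pc by (simp add: algebra_simps)
    have "(A *\<^sub>v v) $ a = (\<Sum>b<N. (?y ^ b - f ?y * (?y + s*eta) ^ b) * coeff c b)"
      using aN unfolding A_def v_def
      by (simp add: mult_mat_vec_def scalar_prod_def lessThan_atLeast0)
    also have "\<dots> = (\<Sum>b<N. coeff c b * ?y ^ b) - f ?y * (\<Sum>b<N. coeff c b * (?y + s*eta) ^ b)"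
      by (simp add: algebra_simps sum_subtractf sum_distrib_left)
    also have "\<dots> = poly c ?y - f ?y * poly c (?y + s*eta)"
      using MN dc by (simp add: poly_sum_lessThan)
    also have "\<dots> = 0" using Qnz unfolding fy pc2 pc by simp
    finally show "(A *\<^sub>v v) $ a = 0\<^sub>v N $ a" using aN by simp
  qed (simp add: A_def)
  have "det A = 0"
    using det_0_iff_vec_prod_zero[OF Ac] vc vnz Av by blast
  then show ?thesis unfolding A_op_def A_def f_def N_def by simp
qed

end
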